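(* Let $f$ be a germ of holomorphic self-map of $\mathbb{C}^2$ tangent to the identity at the origin, of order $k+1$, having $[v]$ as a characteristic direction of degree $s$. Let $\Psi$ be a biholomorphism of $\mathbb{C}^2$ fixing the origin and, near the origin, mapping the complex line $\mathbb{C}v$ into itself. Then $\Psi^{-1}\circ f\circ\Psi$ has $[v]$ as a characteristic direction of degree $s$.
   Context: Write $f(x)=x+\sum_{j\ge k+1}P_j(x)$ with $P_j$ homogeneous of degree $j$ and $P_{k+1}\not\equiv0$ ($k+1$ is the order). $[v]$ is a characteristic direction of a homogeneous map $Q$ if $Q(v)=\lambda v$ for some $\lambda\in\mathbb{C}$, $v\neq 0$. $[v]$ is a characteristic direction of degree $s$ (for $s\ge k+1$) if it is a characteristic direction of each of $P_{k+1},\dots,P_s$. *)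

theory Defs
  imports "HOL-Analysis.Analysis"
begin

definition holo_on :: "(complex^2 \<Rightarrow> complex^2) \<Rightarrow> (complex^2) set \<Rightarrow> bool" where
  "holo_on f U \<longleftrightarrow> open U \<and>
     (\<forall>x\<in>U. \<exists>D. (f has_derivative D) (at x) \<and> (\<forall>(c::complex) h. D (c *s h) = c *s D h))"

definition hom_part :: "(complex^2 \<Rightarrow> complex^2) \<Rightarrow> nat \<Rightarrow> complex^2 \<Rightarrow> complex^2" where
  "hom_part f j x = (\<chi> i. (deriv ^^ j) (\<lambda>t. f (t *s x) $ i) 0 / of_nat (fact j))"

definition char_dir :: "(complex^2 \<Rightarrow> complex^2) \<Rightarrow> complex^2 \<Rightarrow> bool" where
  "char_dir Q v \<longleftrightarrow> v \<noteq> 0 \<and> (\<exists>c::complex. Q v = c *s v)"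

definition tangent_id_order :: "(complex^2 \<Rightarrow> complex^2) \<Rightarrow> nat \<Rightarrow> bool" where
  "tangent_id_order f k \<longleftrightarrow> k \<ge> 1 \<and>
     (\<exists>U. 0 \<in> U \<and> holo_on f U) \<and> f 0 = 0 \<and> (f has_derivative id) (at 0) \<and>
     (\<forall>j. 2 \<le> j \<and> j \<le> k \<longrightarrow> hom_part f j = (\<lambda>x. 0)) \<and>
     hom_part f (k+1) \<noteq> (\<lambda>x. 0)"

definition char_dir_deg :: "(complex^2 \<Rightarrow> complex^2) \<Rightarrow> nat \<Rightarrow> nat \<Rightarrow> complex^2 \<Rightarrow> bool" where
  "char_dir_deg f k s v \<longleftrightarrow> (\<forall>j. k+1 \<le> j \<and> j \<le> s \<longrightarrow> char_dir (hom_part f j) v)"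

end

theory Submission imports Defs "HOL-Complex_Analysis.Complex_Analysis" begin

lemma flat_fwd:
  fixes h :: "complex \<Rightarrow> complex"
  assumes hol: "h holomorphic_on ball 0 r" and r: "r > 0"
    and z: "\<And>j. j \<le> s \<Longrightarrow> (deriv^^j) h 0 = 0"
  shows "\<exists>C \<delta>. \<delta> > 0 \<and> (\<forall>t. norm t < \<delta> \<longrightarrow> norm (h t) \<le> C * norm t ^ Suc s)"
proof (cases "\<forall>n. (deriv^^n) h 0 = 0")
  case True
  then have "\<forall>t. norm t < r \<longrightarrow> h t = 0"
    using holomorphic_fun_eq_0_on_ball[OF hol] by auto
  then show ?thesis using r by (intro exI[of _ 0] exI[of _ r]) auto
next
  case False
  define n where "n = (LEAST n. (deriv^^n) h 0 \<noteq> 0)"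
  have dn: "(deriv^^n) h 0 \<noteq> 0" unfolding n_def using False by (metis (mono_tags, lifting) LeastI)
  have lt: "\<And>i. i < n \<Longrightarrow> (deriv^^i) h 0 = 0" unfolding n_def using not_less_Least by blast
  have sn: "s < n" using z dn by (meson not_le)
  have h0: "h 0 = 0" using z[of 0] by simp
  obtain g r' where r': "0 < r'" "g holomorphic_on ball 0 r'"
    "\<And>w. w \<in> ball 0 r' \<Longrightarrow> h w - h 0 = (w - 0)^n * g w"
    "\<And>w. w \<in> ball 0 r' \<Longrightarrow> g w \<noteq> 0"
    by (rule holomorphic_factor_order_of_zero[OF hol open_ball _ _ dn]) (use lt sn r in auto)
  have "continuous_on (cball 0 (r'/2)) g"
  proof -
    have "cball 0 (r'/2) \<subseteq> ball (0::complex) r'" using r'(1) by (auto simp: subset_iff)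
    then show ?thesis using r'(2) by (meson holomorphic_on_imp_continuous_on holomorphic_on_subset)
  qed
  then obtain B where B: "\<And>w. w \<in> cball 0 (r'/2) \<Longrightarrow> norm (g w) \<le> B"
    using compact_cball compact_imp_bounded bounded_pos compact_continuous_image
    by (metis image_eqI)
  have "\<forall>t. norm t < min (r'/2) 1 \<longrightarrow> norm (h t) \<le> B * norm t ^ Suc s"
  proof (intro allI impI)
    fix t :: complex assume t: "norm t < min (r'/2) 1"
    have "norm t < r'" using t r'(1) by auto
    then have "h t = t^n * g t" using r'(3)[of t] h0 by auto
    then have "norm (h t) = norm t ^ n * norm (g t)" by (simp add: norm_mult norm_power)
    also have "\<dots> \<le> norm t ^ Suc s * B"
      apply (rule mult_mono)
      using t sn B[of t] by (auto intro!: power_decreasing simp del: power_Suc)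
    finally have "norm (h t) \<le> B * norm t ^ Suc s" by (simp add: mult.commute)
    then show "norm (h t) \<le> B * norm t ^ Suc s" by simp
  qed
  then show ?thesis using r'(1) by (intro exI[of _ B] exI[of _ "min (r'/2) 1"]) auto
qed

lemma flat_bwd:
  fixes h :: "complex \<Rightarrow> complex"
  assumes hol: "h holomorphic_on ball 0 r" and r: "r > 0"
    and d: "\<delta> > 0" and bd: "\<And>t. norm t < \<delta> \<Longrightarrow> norm (h t) \<le> C * norm t ^ Suc s"
    and j: "j \<le> s"
  shows "(deriv^^j) h 0 = 0"
proof (rule ccontr)
  assume nz: "(deriv^^j) h 0 \<noteq> 0"
  define n where "n = (LEAST n. (deriv^^n) h 0 \<noteq> 0)"
  have dn: "(deriv^^n) h 0 \<noteq> 0" unfolding n_def using nz by (metis (mono_tags, lifting) LeastI)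
  have lt: "\<And>i. i < n \<Longrightarrow> (deriv^^i) h 0 = 0" unfolding n_def using not_less_Least by blast
  have nj: "n \<le> j" unfolding n_def using nz by (simp add: Least_le)
  have h0: "h 0 = 0" using bd[of 0] d by simp
  then have "n > 0" using dn by (metis funpow_0 gr0I)
  obtain g r' where r': "0 < r'" "g holomorphic_on ball 0 r'"
    "\<And>w. w \<in> ball 0 r' \<Longrightarrow> h w - h 0 = (w - 0)^n * g w"
    "\<And>w. w \<in> ball 0 r' \<Longrightarrow> g w \<noteq> 0"
    by (rule holomorphic_factor_order_of_zero[OF hol open_ball _ \<open>n > 0\<close> dn]) (use lt r in auto)
  have "isCont g 0"
    using r'(1,2) continuous_on_interior[of "ball 0 r'" g 0] holomorphic_on_imp_continuous_on by auto
  have g0: "norm (g 0) > 0" using r'(4)[of 0] r'(1) by simp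
  then have "norm (g 0) / 2 > 0" by simp
  then obtain e where e: "e > 0" "\<forall>t. dist t 0 < e \<longrightarrow> dist (g t) (g 0) < norm (g 0) / 2"
    using \<open>isCont g 0\<close> unfolding continuous_at_eps_delta by blast
  define a where "a = Min {e/2, \<delta>/2, r'/2, 1/2, norm (g 0) / (2 * (\<bar>C\<bar> + 1))}"
  have a: "a > 0" "a < e" "a < \<delta>" "a < r'" "a < 1" "a \<le> norm (g 0) / (2 * (\<bar>C\<bar> + 1))"
    unfolding a_def using e d r'(1) g0 by (auto simp: Min_gr_iff Min_less_iff min_le_iff_disj)
  define t where "t = complex_of_real a"
  have nt: "norm t = a" unfolding t_def using a by simp
  have "h t = t^n * g t" using r'(3)[of t] h0 nt a by auto
  then have "norm t ^ n * norm (g t) \<le> C * norm t ^ Suc s" using bd[of t] nt a by (simp add: norm_mult norm_power)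
  moreover have "norm t ^ Suc s \<le> norm t ^ n * norm t"
  proof -
    have "norm t ^ Suc s \<le> norm t ^ Suc n" using nt a nj j by (intro power_decreasing) auto
    then show ?thesis by (simp add: mult.commute)
  qed
  moreover have "C * norm t ^ Suc s \<le> \<bar>C\<bar> * norm t ^ Suc s" by (intro mult_right_mono) auto
  moreover have "\<bar>C\<bar> * norm t ^ Suc s \<le> \<bar>C\<bar> * (norm t ^ n * norm t)"
    using calculation(2) by (intro mult_left_mono) auto
  ultimately have "norm t ^ n * norm (g t) \<le> norm t ^ n * (\<bar>C\<bar> * norm t)"
    by (simp add: algebra_simps)
  then have gt: "norm (g t) \<le> \<bar>C\<bar> * a" using nt a by (simp add: mult_le_cancel_left_pos)
  have "norm (g t - g 0) < norm (g 0) / 2" using e(2) nt a by (auto simp: dist_norm)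
  moreover have "norm (g 0) - norm (g t) \<le> norm (g t - g 0)"
    by (metis norm_minus_commute norm_triangle_ineq2)
  ultimately have "norm (g 0) / 2 < norm (g t)" by linarith
  moreover have "\<bar>C\<bar> * a \<le> norm (g 0) / 2"
  proof -
    have "\<bar>C\<bar> * a \<le> (\<bar>C\<bar> + 1) * a" using a by (simp add: mult_right_mono)
    also have "\<dots> \<le> (\<bar>C\<bar> + 1) * (norm (g 0) / (2 * (\<bar>C\<bar> + 1)))"
      using a by (intro mult_left_mono) auto
    also have "\<dots> = norm (g 0) / 2" by (simp add: field_simps)
    finally show ?thesis .
  qed
  ultimately show False using gt by linarith
qed

definition lf :: "complex^2 \<Rightarrow> complex^2 \<Rightarrow> complex" where
  "lf v x = v$1 * x$2 - v$2 * x$1"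

lemma lf_par: assumes "v \<noteq> 0" "lf v x = 0" shows "\<exists>c. x = c *s v"
proof (cases "v$1 = 0")
  case True
  then have "v$2 \<noteq> 0" using assms(1) by (metis exhaust_2 vec_eq_iff zero_index)
  then show ?thesis using assms(2) True unfolding lf_def
    by (intro exI[of _ "x$2 / v$2"]) (auto simp: vec_eq_iff forall_2 field_simps)
next
  case False
  then show ?thesis using assms(2) unfolding lf_def
    by (intro exI[of _ "x$1 / v$1"]) (auto simp: vec_eq_iff forall_2 field_simps)
qed

lemma lf_scale: "lf v (c *s v) = 0"
  unfolding lf_def by simp

definition cd :: "(complex \<Rightarrow> complex^2) \<Rightarrow> complex \<Rightarrow> complex^2 \<Rightarrow> bool" where
  "cd G t w \<longleftrightarrow> (G has_derivative (\<lambda>z. z *s w)) (at t)"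

lemma bl_smult: "bounded_linear (\<lambda>z::complex. z *s (v::complex^2))"
proof -
  have "linear (\<lambda>z::complex. z *s v)"
    by (rule linearI) (auto simp: vec_eq_iff algebra_simps)
  then show ?thesis by (simp add: linear_conv_bounded_linear)
qed

lemma cd_line: "cd (\<lambda>t. t *s v) t v"
  unfolding cd_def using bl_smult bounded_linear_imp_has_derivative by blast

lemma cd_comp:
  assumes "cd G t u" "(F has_derivative D) (at (G t))" "\<forall>(c::complex) h. D (c *s h) = c *s D h"
  shows "cd (\<lambda>t. F (G t)) t (D u)"
proof -
  have "((F \<circ> G) has_derivative (D \<circ> (\<lambda>z. z *s u))) (at t)"
    using assms(1,2) unfolding cd_def by (rule diff_chain_at)
  then show ?thesis unfolding cd_def using assms(3) by (simp add: o_def)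
qed

lemma cd_comp_nth:
  fixes G :: "complex \<Rightarrow> complex^2" and w :: "complex^2"
  assumes "cd G t w" shows "((\<lambda>t. G t $ i) has_field_derivative (w $ i)) (at t)"
proof -
  have "((\<lambda>t. G t $ i) has_derivative (\<lambda>z. (z *s w) $ i)) (at t)"
    using bounded_linear.has_derivative[OF bounded_linear_vec_nth assms[unfolded cd_def]] .
  moreover have "(\<lambda>z. (z *s w) $ i) = (*) (w $ i)" by (auto simp: fun_eq_iff mult.commute)
  ultimately show ?thesis unfolding has_field_derivative_def by simp
qed

lemma cd_holo:
  assumes "holo_on F S" "G t \<in> S" "cd G t u"
  shows "\<exists>w. cd (\<lambda>t. F (G t)) t w"
proof -
  obtain D where "(F has_derivative D) (at (G t))" "\<forall>(c::complex) h. D (c *s h) = c *s D h"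
    using assms(1,2) unfolding holo_on_def by blast
  then show ?thesis using cd_comp[OF assms(3)] by blast
qed

lemma cd_isCont: "cd G t w \<Longrightarrow> isCont G t"
  unfolding cd_def by (rule has_derivative_continuous)

lemma cd_hol:
  fixes G :: "complex \<Rightarrow> complex^2"
  assumes "\<forall>t\<in>B. \<exists>w. cd G t w" "open B"
  shows "(\<lambda>t. G t $ i) holomorphic_on B"
  using assms cd_comp_nth unfolding holomorphic_on_open[OF assms(2)] by blast

lemma shrink:
  fixes G :: "complex \<Rightarrow> 'a::metric_space"
  assumes "isCont G 0" "open S" "G 0 \<in> S"
  shows "\<exists>d>0. \<forall>t. norm t < d \<longrightarrow> G t \<in> S"
proof -
  obtain e where e: "e > 0" "ball (G 0) e \<subseteq> S" using assms(2,3) openE by blast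
  then obtain d where "d > 0" "\<forall>t. dist t 0 < d \<longrightarrow> dist (G t) (G 0) < e"
    using assms(1) unfolding continuous_at_eps_delta by blast
  then show ?thesis using e by (intro exI[of _ d]) (auto simp: dist_commute subset_iff)
qed

lemma hom_lf:
  assumes "\<forall>t\<in>ball 0 r. \<exists>w. cd (\<lambda>t. F (t *s v)) t w" "r > 0"
  shows "(deriv^^j) (\<lambda>t. lf v (F (t *s v))) 0 = fact j * lf v (hom_part F j v)"
proof -
  have h1: "(\<lambda>t. F (t *s v) $ 1) holomorphic_on ball 0 r" and h2: "(\<lambda>t. F (t *s v) $ 2) holomorphic_on ball 0 r"
    using cd_hol[OF assms(1)] by auto
  have "(deriv^^j) (\<lambda>t. lf v (F (t *s v))) 0
      = (deriv^^j) (\<lambda>t. v$1 * F (t *s v) $ 2 - v$2 * F (t *s v) $ 1) 0"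
    unfolding lf_def ..
  also have "\<dots> = (deriv^^j) (\<lambda>t. v$1 * F (t *s v) $ 2) 0 - (deriv^^j) (\<lambda>t. v$2 * F (t *s v) $ 1) 0"
    by (rule higher_deriv_diff) (use h1 h2 assms(2) in \<open>auto intro!: holomorphic_intros\<close>)
  also have "\<dots> = v$1 * (deriv^^j) (\<lambda>t. F (t *s v) $ 2) 0 - v$2 * (deriv^^j) (\<lambda>t. F (t *s v) $ 1) 0"
    using higher_deriv_cmult[OF h1] higher_deriv_cmult[OF h2] assms(2) by simp
  also have "\<dots> = fact j * lf v (hom_part F j v)"
    unfolding lf_def hom_part_def by (simp add: field_simps)
  finally show ?thesis .
qed

lemma schwarz_scaled:
  fixes \<psi> :: "complex \<Rightarrow> complex"
  assumes hol: "\<psi> holomorphic_on ball 0 r" and r: "r > 0" and z0: "\<psi> 0 = 0"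
    and M: "\<And>z. norm z < r \<Longrightarrow> norm (\<psi> z) \<le> M" and z: "norm z < r"
  shows "norm (\<psi> z) \<le> (\<bar>M\<bar> + 1) / r * norm z"
proof -
  define F where "F \<xi> = \<psi> (of_real r * \<xi>) / of_real (\<bar>M\<bar> + 1)" for \<xi>
  have "(\<lambda>\<xi>::complex. of_real r * \<xi>) ` ball 0 1 \<subseteq> ball 0 r"
  proof
    fix x :: complex assume "x \<in> (\<lambda>\<xi>. of_real r * \<xi>) ` ball 0 1"
    then obtain \<xi> :: complex where xi: "x = of_real r * \<xi>" "\<xi> \<in> ball 0 1" by blast
    then have "norm \<xi> < 1" by simp
    note xi = xi(1) this
    note xi
    moreover have "r * norm \<xi> < r * 1" using r \<open>norm \<xi> < 1\<close> by (intro mult_strict_left_mono) auto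
    ultimately show "x \<in> ball 0 r" using r by (simp add: norm_mult)
  qed
  then have "F holomorphic_on ball 0 1" unfolding F_def
    by (intro holomorphic_intros holomorphic_on_compose_gen[OF _ hol, unfolded o_def]) auto
  moreover have "F 0 = 0" unfolding F_def using z0 by simp
  moreover have "norm (F \<xi>) < 1" if "norm \<xi> < 1" for \<xi>
  proof -
    have "norm (of_real r * \<xi>) < r" using that r by (simp add: norm_mult)
    then have "norm (\<psi> (of_real r * \<xi>)) \<le> M" by (rule M)
    then show ?thesis unfolding F_def by (simp add: norm_divide)
  qed
  moreover have "norm (z / of_real r) < 1" using z r by (simp add: norm_divide)
  ultimately have "norm (F (z / of_real r)) \<le> norm (z / of_real r)" by (rule Schwarz_Lemma(1))
  moreover have "F (z / of_real r) = \<psi> z / of_real (\<bar>M\<bar> + 1)" unfolding F_def using r by simp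
  ultimately have "norm (\<psi> z) / (\<bar>M\<bar> + 1) \<le> norm z / r" using r by (simp add: norm_divide)
  then show ?thesis using r by (simp add: field_simps)
qed

lemma cd_affine: "cd (\<lambda>z. p + z *s u) t u"
  unfolding cd_def using bl_smult[of u]
  by (intro has_derivative_add_const[of "\<lambda>z. z *s u", simplified add.commute] bounded_linear_imp_has_derivative) auto

lemma norm_smult_vec: "norm (c *s (x::complex^'n)) = norm c * norm x"
proof -
  have "norm (c *s x) = L2_set (\<lambda>i. norm c * norm (x$i)) UNIV"
    unfolding norm_vec_def by (simp add: norm_mult)
  also have "\<dots> = norm c * L2_set (\<lambda>i. norm (x$i)) UNIV"
    by (simp add: L2_set_right_distrib)
  finally show ?thesis unfolding norm_vec_def .
qed

lemma lf_diff: "lf v (a - c *s b) = lf v a - c * lf v b"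
  unfolding lf_def by (simp add: algebra_simps)

lemma lf_add: "lf v (a + b) = lf v a + lf v b"
  unfolding lf_def by (simp add: algebra_simps)

lemma lf_bound: "norm (lf v y) \<le> 2 * norm v * norm y"
proof -
  have "norm (lf v y) \<le> norm (v$1) * norm (y$2) + norm (v$2) * norm (y$1)"
    unfolding lf_def by (metis norm_mult norm_triangle_ineq4)
  also have "\<dots> \<le> norm v * norm y + norm v * norm y"
    by (intro add_mono mult_mono) (auto simp: Finite_Cartesian_Product.norm_nth_le)
  finally show ?thesis by simp
qed

lemma lf_hol:
  fixes G :: "complex \<Rightarrow> complex^2"
  assumes "\<forall>t\<in>B. \<exists>w. cd G t w" "open B"
  shows "(\<lambda>t. lf v (G t)) holomorphic_on B"
  unfolding lf_def using cd_hol[OF assms] by (intro holomorphic_intros) auto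

lemma lf_axis: "lf v (axis 2 1) = v$1" "lf v (axis 1 1) = - v$2"
  unfolding lf_def axis_def by auto

lemma cont_lf: "continuous_on S F \<Longrightarrow> continuous_on S (\<lambda>x. lf v (F x))"
  unfolding lf_def by (intro continuous_intros) auto


lemma phi_est:
  fixes \<Phi> :: "complex^2 \<Rightarrow> complex^2"
  assumes hol: "holo_on \<Phi> W" and W0: "0 \<in> W" and v0: "v \<noteq> 0"
    and eta: "\<eta> > 0" and cl: "\<And>c. norm c < \<eta> \<Longrightarrow> lf v (\<Phi> (c *s v)) = 0"
  shows "\<exists>K \<rho>. K \<ge> 0 \<and> \<rho> > 0 \<and> (\<forall>y. norm y < \<rho> \<longrightarrow> norm (lf v (\<Phi> y)) \<le> K * norm (lf v y))"
proof -
  have oW: "open W" using hol unfolding holo_on_def by blast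
  obtain e where e: "e > 0" "ball 0 e \<subseteq> W" using oW W0 openE by blast
  define R where "R = e / 2"
  have R: "R > 0" "cball 0 R \<subseteq> W" using e unfolding R_def by (auto simp: subset_iff)
  have "\<forall>x\<in>W. isCont \<Phi> x"
    using hol unfolding holo_on_def by (meson has_derivative_continuous)
  then have "continuous_on W \<Phi>" using continuous_at_imp_continuous_on by blast
  then have "continuous_on (cball 0 R) (\<lambda>x. lf v (\<Phi> x))"
    using R(2) by (intro cont_lf) (rule continuous_on_subset)
  then have "compact ((\<lambda>x. lf v (\<Phi> x)) ` cball 0 R)" by (intro compact_continuous_image) auto
  then obtain M where M: "M > 0" "\<And>x. x \<in> cball 0 R \<Longrightarrow> norm (lf v (\<Phi> x)) \<le> M"
    using compact_imp_bounded bounded_pos by (metis image_eqI)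
  obtain i0 where i0: "v $ i0 \<noteq> 0" using v0 by (metis vec_eq_iff zero_index)
  define w0 :: "complex^2" where "w0 = (if v$1 \<noteq> 0 then axis 2 1 else axis 1 1)"
  define L0 where "L0 = lf v w0"
  have L0: "L0 \<noteq> 0"
  proof (cases "v$1 = 0")
    case True
    then have "v$2 \<noteq> 0" using v0 by (metis exhaust_2 vec_eq_iff zero_index)
    then show ?thesis using True unfolding L0_def w0_def by (simp add: lf_axis)
  qed (simp add: L0_def w0_def lf_axis)
  define A where "A = 2 * norm v * norm w0 / norm L0"
  have A0: "A \<ge> 0" unfolding A_def by simp
  define \<rho> where "\<rho> = min (R / (2 * (A + 1))) (\<eta> * norm (v$i0) / (A + 1))"
  have \<rho>: "\<rho> > 0" unfolding \<rho>_def using R A0 eta i0 by auto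
  have \<rho>1: "(A + 1) * \<rho> \<le> R / 2"
  proof -
    have "(A + 1) * \<rho> \<le> (A + 1) * (R / (2 * (A + 1)))" unfolding \<rho>_def using A0 by (intro mult_left_mono) auto
    also have "(A + 1) * (R / (2 * (A + 1))) = R / 2" using A0 by (simp add: field_simps)
    finally show ?thesis .
  qed
  have \<rho>2: "(A + 1) * \<rho> \<le> \<eta> * norm (v$i0)"
  proof -
    have "(A + 1) * \<rho> \<le> (A + 1) * (\<eta> * norm (v$i0) / (A + 1))" unfolding \<rho>_def using A0 by (intro mult_left_mono) auto
    also have "(A + 1) * (\<eta> * norm (v$i0) / (A + 1)) = \<eta> * norm (v$i0)" using A0 by (simp add: field_simps)
    finally show ?thesis .
  qed
  define K where "K = (\<bar>M\<bar> + 1) / (R / 2) * norm w0 / norm L0"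
  have K0: "K \<ge> 0" unfolding K_def using R by simp
  have "norm (lf v (\<Phi> y)) \<le> K * norm (lf v y)" if y: "norm y < \<rho>" for y
  proof -
    define q where "q = lf v y / L0"
    define p where "p = y - q *s w0"
    have "lf v p = 0" unfolding p_def q_def lf_diff L0_def using L0 L0_def by simp
    then obtain c where c: "p = c *s v" using lf_par v0 by blast
    have yp: "norm (y - p) = norm (lf v y) / norm L0 * norm w0"
      unfolding p_def q_def by (simp add: norm_smult_vec norm_divide)
    have ypA: "norm (y - p) \<le> A * norm y"
    proof -
      have "norm (y - p) \<le> 2 * norm v * norm y / norm L0 * norm w0"
        unfolding yp using lf_bound[of v y] L0 by (intro mult_right_mono divide_right_mono) auto
      then show ?thesis unfolding A_def by (simp add: field_simps)
    qed
    have np: "norm p \<le> (A + 1) * norm y"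
    proof -
      have "norm p \<le> norm y + norm (y - p)" by (metis norm_triangle_sub add.commute norm_minus_commute)
      then show ?thesis using ypA by (simp add: algebra_simps)
    qed
    have "(A + 1) * norm y < (A + 1) * \<rho>" using y A0 by (intro mult_strict_left_mono) auto
    then have np2: "norm p < R / 2" "norm p < \<eta> * norm (v$i0)" using np \<rho>1 \<rho>2 by linarith+
    have "norm c * norm (v$i0) = norm (p $ i0)" unfolding c by (simp add: norm_mult)
    also have "\<dots> \<le> norm p" by (rule Finite_Cartesian_Product.norm_nth_le)
    finally have "norm c * norm (v$i0) < \<eta> * norm (v$i0)" using np2 by linarith
    then have "norm c < \<eta>" using i0 by (simp add: mult_less_cancel_right)
    then have Pp: "lf v (\<Phi> p) = 0" using cl c by simp
    show ?thesis
    proof (cases "y = p")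
      case True
      then show ?thesis using Pp K0 by simp
    next
      case False
      define d where "d = norm (y - p)"
      have d0: "d > 0" using False unfolding d_def by simp
      have dR: "d < R / 2"
      proof -
        have "A * norm y \<le> (A + 1) * norm y" by (simp add: algebra_simps)
        then show ?thesis using ypA np \<open>(A + 1) * norm y < (A + 1) * \<rho>\<close> \<rho>1 unfolding d_def by linarith
      qed
      define u where "u = of_real (1 / d) *s (y - p)"
      have nu: "norm u = 1" unfolding u_def norm_smult_vec using d0 unfolding d_def by (simp add: norm_divide)
      define \<psi> where "\<psi> z = lf v (\<Phi> (p + z *s u))" for z
      have inW: "p + z *s u \<in> W" "p + z *s u \<in> cball 0 R" if "norm z < R / 2" for z
      proof -
        have "norm (p + z *s u) \<le> norm p + norm z" using norm_triangle_ineq[of p "z *s u"] nu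
          by (simp add: norm_smult_vec)
        then have "norm (p + z *s u) \<le> R" using that np2 by linarith
        then show "p + z *s u \<in> cball 0 R" by simp
        then show "p + z *s u \<in> W" using R by auto
      qed
      have "\<forall>t\<in>ball 0 (R/2). \<exists>w. cd (\<lambda>z. \<Phi> (p + z *s u)) t w"
        using cd_holo[OF hol _ cd_affine] inW by auto
      then have hol\<psi>: "\<psi> holomorphic_on ball 0 (R/2)" unfolding \<psi>_def by (intro lf_hol) auto
      have "\<psi> 0 = 0" unfolding \<psi>_def using Pp by simp
      have "norm (\<psi> z) \<le> M" if "norm z < R / 2" for z unfolding \<psi>_def using M(2) inW[OF that] by auto
      then have "norm (\<psi> (of_real d)) \<le> (\<bar>M\<bar> + 1) / (R / 2) * norm (complex_of_real d)"
        using schwarz_scaled[OF hol\<psi> _ \<open>\<psi> 0 = 0\<close>, of M "of_real d"] R dR d0 by auto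
      moreover have "p + of_real d *s u = y" unfolding u_def using d0
        by (simp add: vector_smult_assoc)
      ultimately have "norm (lf v (\<Phi> y)) \<le> (\<bar>M\<bar> + 1) / (R / 2) * d"
        unfolding \<psi>_def using d0 by simp
      also have "\<dots> = K * norm (lf v y)" unfolding K_def d_def yp using L0 by (simp add: field_simps)
      finally show ?thesis .
    qed
  qed
  then show ?thesis using K0 \<rho> by blast
qed

theorem lemma2p2:
  fixes f \<Psi> :: "complex^2 \<Rightarrow> complex^2" and k s :: nat and v :: "complex^2" and V :: "(complex^2) set"
  assumes "tangent_id_order f k"
    and "s \<ge> k + 1"
    and "char_dir_deg f k s v"
    and "0 \<in> V" and "holo_on \<Psi> V" and "inj_on \<Psi> V" and "open (\<Psi> ` V)"
    and "holo_on (inv_into V \<Psi>) (\<Psi> ` V)"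
    and "\<Psi> 0 = 0"
    and "\<exists>\<epsilon>>0. \<forall>t::complex. norm (t *s v) < \<epsilon> \<longrightarrow> (\<exists>\<mu>::complex. \<Psi> (t *s v) = \<mu> *s v)"
  shows "char_dir_deg (\<lambda>x. inv_into V \<Psi> (f (\<Psi> x))) k s v"
proof -
  define \<Phi> where "\<Phi> = inv_into V \<Psi>"
  define W where "W = \<Psi> ` V"
  have holPhi: "holo_on \<Phi> W" using assms(8) unfolding \<Phi>_def W_def .
  have oV: "open V" using assms(5) unfolding holo_on_def by blast
  have oW: "open W" using assms(7) W_def by simp
  have W0: "0 \<in> W" using assms(4,9) W_def by force
  obtain U where U: "0 \<in> U" "holo_on f U" using assms(1) unfolding tangent_id_order_def by blast
  have oU: "open U" using U(2) holo_on_def by blast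
  have k1: "k \<ge> 1" "f 0 = 0" "(f has_derivative id) (at 0)" "\<forall>j. 2\<le>j \<and> j\<le>k \<longrightarrow> hom_part f j = (\<lambda>x. 0)"
    using assms(1) unfolding tangent_id_order_def by auto
  have cdd: "\<forall>j. k+1 \<le> j \<and> j \<le> s \<longrightarrow> char_dir (hom_part f j) v" using assms(3) char_dir_deg_def by auto
  have v0: "v \<noteq> 0" using cdd assms(2) char_dir_def by auto
  have PhiPsi: "\<And>x. x \<in> V \<Longrightarrow> \<Phi> (\<Psi> x) = x" using assms(6) \<Phi>_def by (simp add: inv_into_f_f)
  have cl0: "isCont (\<lambda>t::complex. t *s v) 0" using cd_isCont cd_line by blast
  have "(\<lambda>t::complex. t *s v) 0 \<in> V" using assms(4) by simp
  from shrink[OF cl0 oV this] obtain d1 where d1: "d1 > 0" "\<forall>t. norm t < d1 \<longrightarrow> t *s v \<in> V"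
    by blast
  have cdPsi: "\<forall>t\<in>ball 0 d1. \<exists>w. cd (\<lambda>t. \<Psi> (t *s v)) t w"
    using cd_holo[OF assms(5) _ cd_line] d1 by auto
  have "0 \<in> ball (0::complex) d1" using d1 by simp
  then obtain w where "cd (\<lambda>t. \<Psi> (t *s v)) 0 w" using cdPsi by blast
  then have c2: "isCont (\<lambda>t. \<Psi> (t *s v)) 0" by (rule cd_isCont)
  have "(\<lambda>t. \<Psi> (t *s v)) 0 \<in> U" using U(1) assms(9) by simp
  from shrink[OF c2 oU this] obtain d2 where d2: "d2 > 0" "\<forall>t. norm t < d2 \<longrightarrow> \<Psi> (t *s v) \<in> U"
    by blast
  define d3 where "d3 = min d1 d2"
  have cdfPsi: "\<forall>t\<in>ball 0 d3. \<exists>w. cd (\<lambda>t. f (\<Psi> (t *s v))) t w"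
  proof
    fix t :: complex assume t: "t \<in> ball 0 d3"
    then have "t \<in> ball 0 d1" using d3_def by auto
    then obtain w where "cd (\<lambda>t. \<Psi> (t *s v)) t w" using cdPsi by blast
    then show "\<exists>w. cd (\<lambda>t. f (\<Psi> (t *s v))) t w" using cd_holo[OF U(2)] d2 t d3_def by auto
  qed
  have "0 \<in> ball (0::complex) d3" using d1 d2 d3_def by simp
  then obtain w where "cd (\<lambda>t. f (\<Psi> (t *s v))) 0 w" using cdfPsi by blast
  then have c4: "isCont (\<lambda>t. f (\<Psi> (t *s v))) 0" by (rule cd_isCont)
  have "(\<lambda>t. f (\<Psi> (t *s v))) 0 \<in> W" using W0 k1(2) assms(9) by simp
  from shrink[OF c4 oW this] obtain d4 where d4: "d4 > 0" "\<forall>t. norm t < d4 \<longrightarrow> f (\<Psi> (t *s v)) \<in> W"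
    by blast
  define d5 where "d5 = min d3 d4"
  have d5: "d5 > 0" using d1 d2 d4 d3_def d5_def by simp
  have cdg: "\<forall>t\<in>ball 0 d5. \<exists>w. cd (\<lambda>t. \<Phi> (f (\<Psi> (t *s v)))) t w"
  proof
    fix t :: complex assume t: "t \<in> ball 0 d5"
    then have "t \<in> ball 0 d3" using d5_def by auto
    then obtain w where "cd (\<lambda>t. f (\<Psi> (t *s v))) t w" using cdfPsi by blast
    then show "\<exists>w. cd (\<lambda>t. \<Phi> (f (\<Psi> (t *s v)))) t w" using cd_holo[OF holPhi] d4 t d5_def by auto
  qed
  have "(\<lambda>t::complex. t *s v) 0 \<in> U" using U(1) by simp
  from shrink[OF cl0 oU this] obtain df where df: "df > 0" "\<forall>t. norm t < df \<longrightarrow> t *s v \<in> U"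
    by blast
  have cdf: "\<forall>t\<in>ball 0 df. \<exists>w. cd (\<lambda>t. f (t *s v)) t w"
    using cd_holo[OF U(2) _ cd_line] df by auto
  have hl: "lf v (hom_part f j v) = 0" if j: "j \<le> s" for j
  proof -
    consider "j = 0" | "j = 1" | "2 \<le> j \<and> j \<le> k" | "k + 1 \<le> j \<and> j \<le> s" using j k1(1) by linarith
    then show ?thesis
    proof cases
      case 1
      have "hom_part f 0 v = 0" unfolding hom_part_def using k1(2) by (simp add: vec_eq_iff)
      then show ?thesis unfolding 1 lf_def by simp
    next
      case 2
      have "cd (\<lambda>t. f (t *s v)) 0 (id v)"
        by (rule cd_comp[OF cd_line, of f id]) (use k1(3) in auto)
      then have "\<And>i. deriv (\<lambda>t. f (t *s v) $ i) 0 = v $ i"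
        by (metis DERIV_imp_deriv cd_comp_nth id_apply)
      then have "hom_part f 1 v = v" unfolding hom_part_def by (simp add: vec_eq_iff)
      then show ?thesis unfolding 2 lf_def by (simp add: mult.commute)
    next
      case 3
      then show ?thesis using k1(4) unfolding lf_def by simp
    next
      case 4
      then obtain c where "hom_part f j v = c *s v" using cdd unfolding char_dir_def by blast
      then show ?thesis by (simp add: lf_scale)
    qed
  qed
  have hder: "(deriv^^j) (\<lambda>t. lf v (f (t *s v))) 0 = 0" if "j \<le> s" for j
    using hom_lf[OF cdf df(1), of j] hl[OF that] by simp
  have holh: "(\<lambda>t. lf v (f (t *s v))) holomorphic_on ball 0 df" using lf_hol[OF cdf] by simp
  obtain Ch dh where hb: "dh > 0" "\<forall>t. norm t < dh \<longrightarrow> norm (lf v (f (t *s v))) \<le> Ch * norm t ^ Suc s"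
    using flat_fwd[OF holh df(1) hder] by blast
  obtain e0 where e0: "e0 > 0" "\<forall>t::complex. norm (t *s v) < e0 \<longrightarrow> (\<exists>\<mu>::complex. \<Psi> (t *s v) = \<mu> *s v)"
    using assms(10) by blast
  obtain i0 where i0: "v $ i0 \<noteq> 0" using v0 by (metis vec_eq_iff zero_index)
  define mu where "mu t = \<Psi> (t *s v) $ i0 / v $ i0" for t
  obtain de where de: "de > 0" "\<forall>t. norm t < de \<longrightarrow> t *s v \<in> ball 0 e0"
    using shrink[OF cl0 open_ball, of 0 e0] e0(1) by auto
  define dm where "dm = min d1 de"
  have dm: "dm > 0" using d1 de dm_def by simp
  have psimu: "\<Psi> (t *s v) = mu t *s v" if "norm t < dm" for t
  proof -
    have "norm (t *s v) < e0" using de that dm_def by auto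
    then obtain m where m: "\<Psi> (t *s v) = m *s v" using e0 by blast
    then have "mu t = m" unfolding mu_def using i0 by simp
    then show ?thesis using m by simp
  qed
  have holmu: "mu holomorphic_on ball 0 dm"
  proof -
    have "(\<lambda>t. \<Psi> (t *s v) $ i0) holomorphic_on ball 0 d1" using cd_hol[OF cdPsi] by simp
    then have "(\<lambda>t. \<Psi> (t *s v) $ i0) holomorphic_on ball 0 dm"
      by (rule holomorphic_on_subset) (auto simp: dm_def)
    then show ?thesis unfolding mu_def by (intro holomorphic_intros) auto
  qed
  have mu0: "mu 0 = 0" unfolding mu_def using assms(9) by simp
  define t1 where "t1 = complex_of_real (dm / 2)"
  have t1: "norm t1 < dm" "t1 \<noteq> 0" unfolding t1_def using dm by auto
  have "mu t1 \<noteq> 0"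
  proof
    assume "mu t1 = 0"
    then have "\<Psi> (t1 *s v) = \<Psi> 0" using psimu[OF t1(1)] assms(9) by simp
    moreover have "t1 *s v \<in> V" using d1 t1 dm_def by auto
    ultimately have "t1 *s v = 0" using inj_onD[OF assms(6)] assms(4) by blast
    then show False using t1(2) v0 by simp
  qed
  have "\<not> mu constant_on ball 0 dm"
  proof
    assume "mu constant_on ball 0 dm"
    then obtain y where "\<forall>x\<in>ball 0 dm. mu x = y" unfolding constant_on_def by blast
    moreover have "0 \<in> ball (0::complex) dm" "t1 \<in> ball 0 dm" using dm t1 by auto
    ultimately have "mu 0 = y" "mu t1 = y" by blast+
    then show False using mu0 \<open>mu t1 \<noteq> 0\<close> by simp
  qed
  then have "open (mu ` ball 0 dm)"
    using open_mapping_thm[OF holmu open_ball connected_ball open_ball order_refl] by blast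
  moreover have "0 \<in> mu ` ball 0 dm" using mu0 dm by (intro rev_image_eqI[of 0]) auto
  ultimately obtain \<eta> where eta: "\<eta> > 0" "ball 0 \<eta> \<subseteq> mu ` ball 0 dm" using openE by blast
  have cl: "lf v (\<Phi> (c *s v)) = 0" if "norm c < \<eta>" for c
  proof -
    have "c \<in> mu ` ball 0 dm" using eta that by auto
    then obtain t where "t \<in> ball 0 dm" "c = mu t" by blast
    then have t: "norm t < dm" "c = mu t" by auto
    have "t *s v \<in> V" using t d1 dm_def by auto
    then have "\<Phi> (c *s v) = t *s v" using psimu[OF t(1)] PhiPsi t(2) by metis
    then show ?thesis by (simp add: lf_scale)
  qed
  obtain K \<rho> where K: "K \<ge> 0" "\<rho> > 0" "\<forall>y. norm y < \<rho> \<longrightarrow> norm (lf v (\<Phi> y)) \<le> K * norm (lf v y)"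
    using phi_est[OF holPhi W0 v0 eta(1) cl] by blast
  obtain Cm dmm where mb: "dmm > 0" "\<forall>t. norm t < dmm \<longrightarrow> norm (mu t) \<le> Cm * norm t ^ Suc 0"
    using flat_fwd[OF holmu dm, of 0] mu0 by auto
  have "(\<lambda>t. f (\<Psi> (t *s v))) 0 \<in> ball 0 \<rho>" using K(2) k1(2) assms(9) by simp
  from shrink[OF c4 open_ball this] obtain dy where dy: "dy > 0" "\<forall>t. norm t < dy \<longrightarrow> f (\<Psi> (t *s v)) \<in> ball 0 \<rho>"
    by blast
  define C where "C = K * \<bar>Ch\<bar> * \<bar>Cm\<bar> ^ Suc s"
  define d6 where "d6 = Min {dm, dmm, dy, dh / (\<bar>Cm\<bar> + 1)}"
  have d6: "d6 > 0" unfolding d6_def using dm mb dy hb by auto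
  have bnd: "norm (lf v (\<Phi> (f (\<Psi> (t *s v))))) \<le> C * norm t ^ Suc s" if t: "norm t < d6" for t
  proof -
    have t': "norm t < dm" "norm t < dmm" "norm t < dy" "norm t < dh / (\<bar>Cm\<bar> + 1)"
      using t unfolding d6_def by auto
    have m1: "norm (mu t) \<le> \<bar>Cm\<bar> * norm t"
    proof -
      have "norm (mu t) \<le> Cm * norm t" using mb(2) t'(2) by simp
      also have "\<dots> \<le> \<bar>Cm\<bar> * norm t" by (intro mult_right_mono) auto
      finally show ?thesis .
    qed
    have "\<bar>Cm\<bar> * norm t \<le> (\<bar>Cm\<bar> + 1) * norm t" by (simp add: algebra_simps)
    also have "\<dots> < dh" using t'(4) by (simp add: field_simps)
    finally have m2: "norm (mu t) < dh" using m1 by linarith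
    have "norm (lf v (\<Phi> (f (\<Psi> (t *s v))))) \<le> K * norm (lf v (f (\<Psi> (t *s v))))"
      using K(3) dy t'(3) by auto
    also have "lf v (f (\<Psi> (t *s v))) = lf v (f (mu t *s v))" using psimu t'(1) by simp
    also have "K * norm \<dots> \<le> K * (\<bar>Ch\<bar> * norm (mu t) ^ Suc s)"
    proof -
      have "norm (lf v (f (mu t *s v))) \<le> Ch * norm (mu t) ^ Suc s" using hb m2 by blast
      also have "\<dots> \<le> \<bar>Ch\<bar> * norm (mu t) ^ Suc s" by (intro mult_right_mono) auto
      finally show ?thesis using K(1) by (intro mult_left_mono) auto
    qed
    also have "\<dots> \<le> K * (\<bar>Ch\<bar> * (\<bar>Cm\<bar> * norm t) ^ Suc s)"
      using K(1) m1 by (intro mult_left_mono power_mono) auto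
    also have "\<dots> = C * norm t ^ Suc s" unfolding C_def by (simp add: power_mult_distrib algebra_simps)
    finally show ?thesis .
  qed
  define d7 where "d7 = min d5 d6"
  have d7: "d7 > 0" using d5 d6 d7_def by simp
  have cdg7: "\<forall>t\<in>ball 0 d7. \<exists>w. cd (\<lambda>t. \<Phi> (f (\<Psi> (t *s v)))) t w" using cdg d7_def by auto
  have holphi: "(\<lambda>t. lf v (\<Phi> (f (\<Psi> (t *s v))))) holomorphic_on ball 0 d7" using lf_hol[OF cdg7] by simp
  show ?thesis unfolding char_dir_deg_def
  proof (intro allI impI)
    fix j assume j: "k + 1 \<le> j \<and> j \<le> s"
    have "(deriv^^j) (\<lambda>t. lf v (\<Phi> (f (\<Psi> (t *s v))))) 0 = 0"
      by (rule flat_bwd[OF holphi d7 d6, of C s]) (use bnd j in auto)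
    then have "lf v (hom_part (\<lambda>x. \<Phi> (f (\<Psi> x))) j v) = 0"
      using hom_lf[OF cdg7 d7, of j] by simp
    then show "char_dir (hom_part (\<lambda>x. inv_into V \<Psi> (f (\<Psi> x))) j) v"
      unfolding char_dir_def \<Phi>_def using lf_par v0 by blast
  qed
qed

end
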